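(* For every connected graph $G$ of order $n\geq 2$, $\mathrm{ldim}_f(G)\leq \frac{n}{2}$.
   Context: All graphs are finite, simple and connected; $d$ is the shortest-path distance. For an edge $uv$, $L(uv)=\{x\in V(G): d(u,x)\neq d(v,x)\}$. A function $f:V(G)\to[0,1]$ is a local resolving function of $G$ if $\sum_{x\in L(uv)}f(x)\geq 1$ for every edge $uv$; $\mathrm{ldim}_f(G)$ is the minimum of $\sum_{v}f(v)$ over all local resolving functions. *)

theory Defs
  imports Complex_Main
begin

definition simple_graph :: "'a set \<Rightarrow> ('a \<Rightarrow> 'a \<Rightarrow> bool) \<Rightarrow> bool" where
  "simple_graph V E \<longleftrightarrow> finite V \<and> (\<forall>u v. E u v \<longrightarrow> u \<in> V \<and> v \<in> V)
     \<and> (\<forall>u v. E u v \<longrightarrow> E v u) \<and> (\<forall>v. \<not> E v v)"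

text \<open>A walk of length n from u to v: a vertex list of length n+1.\<close>
definition walk :: "'a set \<Rightarrow> ('a \<Rightarrow> 'a \<Rightarrow> bool) \<Rightarrow> 'a list \<Rightarrow> bool" where
  "walk V E p \<longleftrightarrow> p \<noteq> [] \<and> set p \<subseteq> V \<and> (\<forall>i. Suc i < length p \<longrightarrow> E (p ! i) (p ! Suc i))"

definition connected_graph :: "'a set \<Rightarrow> ('a \<Rightarrow> 'a \<Rightarrow> bool) \<Rightarrow> bool" where
  "connected_graph V E \<longleftrightarrow> V \<noteq> {} \<and>
     (\<forall>u\<in>V. \<forall>v\<in>V. \<exists>p. walk V E p \<and> hd p = u \<and> last p = v)"

definition gdist :: "'a set \<Rightarrow> ('a \<Rightarrow> 'a \<Rightarrow> bool) \<Rightarrow> 'a \<Rightarrow> 'a \<Rightarrow> nat" where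
  "gdist V E u v = (LEAST n. \<exists>p. walk V E p \<and> hd p = u \<and> last p = v \<and> length p = Suc n)"

definition resolving_set_of_edge :: "'a set \<Rightarrow> ('a \<Rightarrow> 'a \<Rightarrow> bool) \<Rightarrow> 'a \<Rightarrow> 'a \<Rightarrow> 'a set" where
  "resolving_set_of_edge V E u v = {x \<in> V. gdist V E u x \<noteq> gdist V E v x}"

definition local_resolving_function :: "'a set \<Rightarrow> ('a \<Rightarrow> 'a \<Rightarrow> bool) \<Rightarrow> ('a \<Rightarrow> real) \<Rightarrow> bool" where
  "local_resolving_function V E f \<longleftrightarrow>
     (\<forall>v\<in>V. 0 \<le> f v \<and> f v \<le> 1) \<and>
     (\<forall>u v. E u v \<longrightarrow> (\<Sum>x\<in>resolving_set_of_edge V E u v. f x) \<ge> 1)"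

definition ldim_f :: "'a set \<Rightarrow> ('a \<Rightarrow> 'a \<Rightarrow> bool) \<Rightarrow> real" where
  "ldim_f V E = Inf {(\<Sum>v\<in>V. f v) | f. local_resolving_function V E f}"

end

theory Submission
  imports Defs
begin

lemma gdist_self:
  assumes "u \<in> V" shows "gdist V E u u = 0"
proof -
  have "walk V E [u]" using assms by (simp add: walk_def)
  then show ?thesis unfolding gdist_def
    by (intro Least_eq_0) (rule exI[of _ "[u]"], simp)
qed

lemma gdist_edge_nz:
  assumes "simple_graph V E" "E v u" shows "gdist V E v u \<noteq> 0"
proof
  assume h: "gdist V E v u = 0"
  have uv: "u \<in> V" "v \<in> V" "u \<noteq> v" using assms unfolding simple_graph_def by metis+
  have w: "walk V E [v,u]" using uv assms(2) by (auto simp: walk_def less_Suc_eq)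
  have "\<exists>n p. walk V E p \<and> hd p = v \<and> last p = u \<and> length p = Suc n"
    using w by (intro exI[of _ 1] exI[of _ "[v,u]"]) simp
  then obtain n where "\<exists>p. walk V E p \<and> hd p = v \<and> last p = u \<and> length p = Suc n" by blast
  hence "\<exists>p. walk V E p \<and> hd p = v \<and> last p = u \<and> length p = Suc (gdist V E v u)"
    unfolding gdist_def by (rule LeastI)
  then obtain p where "hd p = v" "last p = u" "length p = 1" using h by auto
  then show False using uv by (cases p) auto
qed

theorem corollary2p9:
  fixes V :: "'a set" and E :: "'a \<Rightarrow> 'a \<Rightarrow> bool"
  assumes "simple_graph V E" and "connected_graph V E" and "card V \<ge> 2"
  shows "ldim_f V E \<le> real (card V) / 2"
proof -
  define f :: "'a \<Rightarrow> real" where "f = (\<lambda>_. 1/2)"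
  have fin: "finite V" using assms(1) by (simp add: simple_graph_def)
  have lrf: "local_resolving_function V E f"
    unfolding local_resolving_function_def
  proof (intro conjI allI impI)
    show "\<forall>v\<in>V. 0 \<le> f v \<and> f v \<le> 1" by (simp add: f_def)
  next
    fix u v assume e: "E u v"
    have uv: "u \<in> V" "v \<in> V" "u \<noteq> v" "E v u" using assms(1) e unfolding simple_graph_def by metis+
    have "u \<in> resolving_set_of_edge V E u v"
      using uv gdist_self[of u V E] gdist_edge_nz[OF assms(1) uv(4)]
      by (simp add: resolving_set_of_edge_def)
    moreover have "v \<in> resolving_set_of_edge V E u v"
      using uv gdist_self[of v V E] gdist_edge_nz[OF assms(1) e]
      by (simp add: resolving_set_of_edge_def)
    moreover have "finite (resolving_set_of_edge V E u v)"
      using fin by (simp add: resolving_set_of_edge_def)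
    ultimately have "(\<Sum>x\<in>{u,v}. f x) \<le> (\<Sum>x\<in>resolving_set_of_edge V E u v. f x)"
      by (intro sum_mono2) (auto simp: f_def)
    then show "1 \<le> (\<Sum>x\<in>resolving_set_of_edge V E u v. f x)" using uv by (simp add: f_def)
  qed
  have "bdd_below {(\<Sum>v\<in>V. f v) | f. local_resolving_function V E f}"
    by (rule bdd_belowI[of _ 0]) (auto simp: local_resolving_function_def intro!: sum_nonneg)
  hence "ldim_f V E \<le> (\<Sum>v\<in>V. f v)"
    unfolding ldim_f_def using lrf by (intro cInf_lower) auto
  also have "\<dots> = real (card V) / 2" by (simp add: f_def)
  finally show ?thesis .
qed

end
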